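(* Let $k\ge1$ be an integer, $p$ a prime, $\theta>0$, and $\mathbf u=(u_1,\dots,u_{2k})\in\mathbb C^{2k}$ with $\Re(u_i)\ge\theta$ for all $i$. Then $$B_{p,2k}(\mathbf u;0)=\prod_{1\le i\le j\le2k}\Big(1-\frac1{p^{u_i+u_j}}\Big)^{-1}C_{p,2k}(\mathbf u),$$ where $$C_{p,2k}(\mathbf u)=\prod_{1\le i<j\le2k}\Big(1-\frac1{p^{u_i+u_j}}\Big)\sum_{\substack{A\subseteq\{1,\dots,2k\}\\|A|\text{ even}}}\prod_{i\in A}\frac1{p^{u_i}}=1+O\Big(\frac1{p^{4\theta}}\Big).$$
   Context: For a prime $p$, an integer $k\ge1$, $\mathbf u\in\mathbb C^k$ and $a\in\{0,1\}$, $$B_{p,k}(\mathbf u;a)=\sum_{\substack{n_1,\dots,n_k\ge0\\ n_1+\dots+n_k\equiv a\ (\mathrm{mod}\ 2)}}\frac1{p^{n_1u_1+\dots+n_ku_k}}.$$ *)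

theory Defs
  imports "HOL-Analysis.Analysis"
begin

text \<open>Vectors u in C^k are functions nat => complex, read on indices 1..k.
  Tuples (n_1,...,n_k) of naturals are functions nat => nat vanishing outside 1..k.\<close>

definition Bpk :: "nat \<Rightarrow> nat \<Rightarrow> (nat \<Rightarrow> complex) \<Rightarrow> nat \<Rightarrow> complex" where
  "Bpk p k u a =
     infsum (\<lambda>n. 1 / (of_nat p) powr (\<Sum>i\<in>{1..k}. of_nat (n i) * u i))
       {n :: nat \<Rightarrow> nat. (\<forall>i. i \<notin> {1..k} \<longrightarrow> n i = 0) \<and> (\<Sum>i\<in>{1..k}. n i) mod 2 = a mod 2}"

definition Cpk :: "nat \<Rightarrow> nat \<Rightarrow> (nat \<Rightarrow> complex) \<Rightarrow> complex" where
  "Cpk p k u =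
     (\<Prod>i\<in>{1..k}. \<Prod>j\<in>{i<..k}. (1 - 1 / (of_nat p) powr (u i + u j)))
     * (\<Sum>A\<in>{A. A \<subseteq> {1..k} \<and> even (card A)}. \<Prod>i\<in>A. 1 / (of_nat p) powr (u i))"

end

theory Submission
  imports Defs
begin


lemma geo_has_sum:
  fixes z :: complex assumes "norm z < 1"
  shows "((\<lambda>n. z ^ n) has_sum (1 / (1 - z))) UNIV"
proof -
  have "(\<lambda>n. z ^ n) sums (1 / (1 - z))" using geometric_sums[OF assms] by simp
  moreover have "summable (\<lambda>n. norm (z ^ n))"
    using assms by (auto simp: norm_power intro!: summable_geometric)
  ultimately show ?thesis by (intro norm_summable_imp_has_sum)
qed

lemma geo_real_has_sum:
  fixes z :: real assumes "0 \<le> z" "z < 1"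
  shows "((\<lambda>n. z ^ n) has_sum (1 / (1 - z))) UNIV"
proof -
  have "(\<lambda>n. z ^ n) sums (1 / (1 - z))" using geometric_sums[of z] assms by simp
  moreover have "summable (\<lambda>n. norm (z ^ n))"
    using assms by (auto simp: norm_power intro!: summable_geometric)
  ultimately show ?thesis by (intro norm_summable_imp_has_sum)
qed

lemma prod_geo_PiE:
  fixes x :: "nat \<Rightarrow> complex"
  assumes I: "finite I" and hx: "\<And>i. i \<in> I \<Longrightarrow> norm (x i) < 1"
  shows "((\<lambda>g. \<Prod>i\<in>I. x i ^ g i) has_sum (\<Prod>i\<in>I. 1 / (1 - x i))) (PiE I (\<lambda>_. UNIV))"
proof -
  have absr: "(\<lambda>n. norm (norm (x i) ^ n)) summable_on UNIV" if "i \<in> I" for i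
    using geo_real_has_sum[of "norm (x i)"] hx[OF that] by (auto simp: has_sum_iff)
  have inr: "infsum (\<lambda>g. \<Prod>i\<in>I. norm (x i) ^ g i) (PiE I (\<lambda>_. UNIV))
        = (\<Prod>i\<in>I. infsum (\<lambda>n. norm (x i) ^ n) UNIV)"
    by (rule infsum_prod_PiE_abs[OF I absr])
  also have "\<dots> = (\<Prod>i\<in>I. 1 / (1 - norm (x i)))"
  proof (rule prod.cong[OF refl])
    fix i assume "i \<in> I"
    show "infsum (\<lambda>n. norm (x i) ^ n) UNIV = 1 / (1 - norm (x i))"
      using hx[OF \<open>i \<in> I\<close>] by (intro infsumI geo_real_has_sum) auto
  qed
  also have "\<dots> > 0" using hx by (intro prod_pos) (auto simp: less_imp_le)
  finally have "(\<lambda>g. \<Prod>i\<in>I. norm (x i) ^ g i) summable_on (PiE I (\<lambda>_. UNIV))"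
    by (metis infsum_not_exists less_irrefl)
  hence abs: "(\<lambda>g. norm (\<Prod>i\<in>I. x i ^ g i)) summable_on (PiE I (\<lambda>_. UNIV))"
  proof -
    have "norm (\<Prod>i\<in>I. x i ^ g i) = (\<Prod>i\<in>I. norm (x i) ^ g i)" for g
      unfolding prod_norm[symmetric] norm_power ..
    thus ?thesis using \<open>(\<lambda>g. \<Prod>i\<in>I. norm (x i) ^ g i) summable_on _\<close> by simp
  qed
  have abs1: "(\<lambda>n. norm (x i ^ n)) summable_on UNIV" if "i \<in> I" for i
    using absr[OF that] by (simp add: norm_power)
  have "infsum (\<lambda>g. \<Prod>i\<in>I. x i ^ g i) (PiE I (\<lambda>_. UNIV)) = (\<Prod>i\<in>I. infsum (\<lambda>n. x i ^ n) UNIV)"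
    by (rule infsum_prod_PiE_abs[OF I abs1])
  also have "\<dots> = (\<Prod>i\<in>I. 1 / (1 - x i))"
  proof (rule prod.cong[OF refl])
    fix i assume "i \<in> I"
    show "infsum (\<lambda>n. x i ^ n) UNIV = 1 / (1 - x i)"
      by (rule infsumI[OF geo_has_sum[OF hx[OF \<open>i \<in> I\<close>]]])
  qed
  finally have v: "infsum (\<lambda>g. \<Prod>i\<in>I. x i ^ g i) (PiE I (\<lambda>_. UNIV)) = (\<Prod>i\<in>I. 1 / (1 - x i))" .
  show ?thesis unfolding has_sum_iff using abs_summable_summable[OF abs] v by (intro conjI)
qed

definition Nall :: "nat set \<Rightarrow> (nat \<Rightarrow> nat) set" where
  "Nall I = {n. \<forall>i. i \<notin> I \<longrightarrow> n i = 0}"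

lemma prod_geo_Nall:
  fixes x :: "nat \<Rightarrow> complex"
  assumes I: "finite I" and hx: "\<And>i. i \<in> I \<Longrightarrow> norm (x i) < 1"
  shows "((\<lambda>n. \<Prod>i\<in>I. x i ^ n i) has_sum (\<Prod>i\<in>I. 1 / (1 - x i))) (Nall I)"
proof -
  have bij: "bij_betw (\<lambda>n. restrict n I) (Nall I) (PiE I (\<lambda>_. UNIV))"
  proof (rule bij_betw_byWitness[where f' = "\<lambda>g i. if i \<in> I then g i else 0"])
    show "\<forall>a\<in>Nall I. (\<lambda>i. if i \<in> I then restrict a I i else 0) = a"
      by (auto simp: Nall_def fun_eq_iff)
    show "\<forall>a'\<in>PiE I (\<lambda>_. UNIV). restrict (\<lambda>i. if i \<in> I then a' i else 0) I = a'"
      by (auto simp: fun_eq_iff PiE_def extensional_def)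
    show "(\<lambda>n. restrict n I) ` Nall I \<subseteq> PiE I (\<lambda>_. UNIV)" by auto
    show "(\<lambda>g i. if i \<in> I then g i else 0) ` PiE I (\<lambda>_. UNIV) \<subseteq> Nall I"
      by (auto simp: Nall_def)
  qed
  have P: "((\<lambda>g. \<Prod>i\<in>I. x i ^ g i) has_sum (\<Prod>i\<in>I. 1 / (1 - x i))) (PiE I (\<lambda>_. UNIV))"
    using prod_geo_PiE[of I x] I hx by blast
  have "((\<lambda>n. (\<lambda>g. \<Prod>i\<in>I. x i ^ g i) (restrict n I)) has_sum (\<Prod>i\<in>I. 1 / (1 - x i))) (Nall I)"
    using has_sum_reindex_bij_betw[OF bij, of "\<lambda>g. \<Prod>i\<in>I. x i ^ g i"] P by blast
  moreover have "(\<lambda>n. (\<lambda>g. \<Prod>i\<in>I. x i ^ g i) (restrict n I)) = (\<lambda>n. \<Prod>i\<in>I. x i ^ n i)"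
    by (auto intro!: prod.cong)
  ultimately show ?thesis by simp
qed



lemma summand_eq:
  fixes u :: "nat \<Rightarrow> complex" and p :: nat
  assumes "p > 0"
  shows "1 / (of_nat p) powr (\<Sum>i\<in>I. of_nat (n i) * u i) = (\<Prod>i\<in>I. (1 / (of_nat p) powr u i) ^ n i)"
proof -
  have p0: "(of_nat p :: complex) \<noteq> 0" using assms by simp
  have "(of_nat p :: complex) powr (\<Sum>i\<in>I. of_nat (n i) * u i) = (\<Prod>i\<in>I. (of_nat p) powr (of_nat (n i) * u i))"
    by (rule powr_sum[OF p0])
  also have "\<dots> = (\<Prod>i\<in>I. ((of_nat p) powr u i) ^ n i)"
    using powr_power[OF p0] by simp
  finally have e: "(of_nat p :: complex) powr (\<Sum>i\<in>I. of_nat (n i) * u i) = (\<Prod>i\<in>I. ((of_nat p) powr u i) ^ n i)" .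
  have "(\<Prod>i\<in>I. (1 / (of_nat p :: complex) powr u i) ^ n i) = 1 / (\<Prod>i\<in>I. ((of_nat p) powr u i) ^ n i)"
    by (simp only: power_one_over prod_dividef prod.neutral_const)
  thus ?thesis unfolding e by (rule sym)
qed

lemma even_sum_Nall:
  fixes x :: "nat \<Rightarrow> complex"
  assumes I: "finite I" and hx: "\<And>i. i \<in> I \<Longrightarrow> norm (x i) < 1"
  shows "((\<lambda>n. \<Prod>i\<in>I. x i ^ n i) has_sum ((\<Prod>i\<in>I. 1 / (1 - x i)) + (\<Prod>i\<in>I. 1 / (1 + x i))) / 2)
           {n. (\<forall>i. i \<notin> I \<longrightarrow> n i = 0) \<and> (\<Sum>i\<in>I. n i) mod 2 = 0 mod 2}"
proof -
  have F: "((\<lambda>n. \<Prod>i\<in>I. x i ^ n i) has_sum (\<Prod>i\<in>I. 1 / (1 - x i))) (Nall I)"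
    by (rule prod_geo_Nall[of I x, OF I hx])
  have G0: "((\<lambda>n. \<Prod>i\<in>I. (- x i) ^ n i) has_sum (\<Prod>i\<in>I. 1 / (1 - (- x i)))) (Nall I)"
  proof -
    have hx': "\<And>i. i \<in> I \<Longrightarrow> norm (- x i) < 1" using hx by simp
    show ?thesis by (rule prod_geo_Nall[of I "\<lambda>i. - x i", OF I hx'])
  qed
  have eqm: "(\<Prod>i\<in>I. (- x i) ^ n i) = (-1) ^ (\<Sum>i\<in>I. n i) * (\<Prod>i\<in>I. x i ^ n i)" for n
  proof -
    have "(\<Prod>i\<in>I. (- x i) ^ n i) = (\<Prod>i\<in>I. (-1) ^ n i * x i ^ n i)"
      by (intro prod.cong refl) (rule power_minus)
    also have "\<dots> = (-1) ^ (\<Sum>i\<in>I. n i) * (\<Prod>i\<in>I. x i ^ n i)"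
      by (simp add: prod.distrib power_sum)
    finally show ?thesis .
  qed
  have G: "((\<lambda>n. (-1) ^ (\<Sum>i\<in>I. n i) * (\<Prod>i\<in>I. x i ^ n i)) has_sum (\<Prod>i\<in>I. 1 / (1 + x i))) (Nall I)"
    using G0 unfolding eqm by simp
  have FG: "((\<lambda>n. ((\<Prod>i\<in>I. x i ^ n i) + (-1) ^ (\<Sum>i\<in>I. n i) * (\<Prod>i\<in>I. x i ^ n i)) / 2) has_sum
      ((\<Prod>i\<in>I. 1 / (1 - x i)) + (\<Prod>i\<in>I. 1 / (1 + x i))) / 2) (Nall I)"
    by (intro has_sum_divide_const has_sum_add F G)
  show ?thesis
  proof (subst has_sum_cong_neutral[where T = "Nall I"])
    show "((\<lambda>n. ((\<Prod>i\<in>I. x i ^ n i) + (-1) ^ (\<Sum>i\<in>I. n i) * (\<Prod>i\<in>I. x i ^ n i)) / 2) has_sum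
      ((\<Prod>i\<in>I. 1 / (1 - x i)) + (\<Prod>i\<in>I. 1 / (1 + x i))) / 2) (Nall I)" by (rule FG)
  next
    fix n assume "n \<in> Nall I - {n. (\<forall>i. i \<notin> I \<longrightarrow> n i = 0) \<and> (\<Sum>i\<in>I. n i) mod 2 = 0 mod 2}"
    hence "odd (\<Sum>i\<in>I. n i)" by (auto simp: Nall_def)
    thus "((\<Prod>i\<in>I. x i ^ n i) + (-1) ^ (\<Sum>i\<in>I. n i) * (\<Prod>i\<in>I. x i ^ n i)) / 2 = 0" by simp
  next
    fix n assume "n \<in> {n. (\<forall>i. i \<notin> I \<longrightarrow> n i = 0) \<and> (\<Sum>i\<in>I. n i) mod 2 = 0 mod 2} - Nall I"
    thus "(\<Prod>i\<in>I. x i ^ n i) = 0" by (auto simp: Nall_def)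
  next
    fix n assume "n \<in> {n. (\<forall>i. i \<notin> I \<longrightarrow> n i = 0) \<and> (\<Sum>i\<in>I. n i) mod 2 = 0 mod 2} \<inter> Nall I"
    hence "even (\<Sum>i\<in>I. n i)" by auto
    thus "(\<Prod>i\<in>I. x i ^ n i) = ((\<Prod>i\<in>I. x i ^ n i) + (-1) ^ (\<Sum>i\<in>I. n i) * (\<Prod>i\<in>I. x i ^ n i)) / 2"
      by simp
  qed
qed

lemma even_subsets_sum:
  fixes x :: "nat \<Rightarrow> complex"
  assumes I: "finite I"
  shows "(\<Sum>A\<in>{A. A \<subseteq> I \<and> even (card A)}. \<Prod>i\<in>A. x i) = ((\<Prod>i\<in>I. 1 + x i) + (\<Prod>i\<in>I. 1 - x i)) / 2"
proof -
  have p1: "(\<Prod>i\<in>I. 1 + x i) = (\<Sum>X\<in>Pow I. \<Prod>i\<in>X. x i)"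
    using prod_add[OF I, of x "\<lambda>_. 1"] by (simp add: add.commute)
  have p2: "(\<Prod>i\<in>I. 1 - x i) = (\<Sum>X\<in>Pow I. (-1) ^ card X * (\<Prod>i\<in>X. x i))"
  proof -
    have "(\<Prod>i\<in>I. 1 - x i) = (\<Sum>X\<in>Pow I. (\<Prod>i\<in>X. - x i))"
      using prod_add[OF I, of "\<lambda>i. - x i" "\<lambda>_. 1"] by (simp add: add.commute)
    also have "\<dots> = (\<Sum>X\<in>Pow I. (-1) ^ card X * (\<Prod>i\<in>X. x i))"
    proof (intro sum.cong refl)
      fix X assume "X \<in> Pow I"
      have "(\<Prod>i\<in>X. - x i) = (\<Prod>i\<in>X. (-1) * x i)" by simp
      also have "\<dots> = (-1) ^ card X * (\<Prod>i\<in>X. x i)" by (subst prod.distrib) simp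
      finally show "(\<Prod>i\<in>X. - x i) = (-1) ^ card X * (\<Prod>i\<in>X. x i)" .
    qed
    finally show ?thesis .
  qed
  have "(\<Prod>i\<in>I. 1 + x i) + (\<Prod>i\<in>I. 1 - x i) = (\<Sum>X\<in>Pow I. (1 + (-1) ^ card X) * (\<Prod>i\<in>X. x i))"
    unfolding p1 p2 sum.distrib[symmetric] by (intro sum.cong refl) (simp only: distrib_right mult_1_left)
  also have "\<dots> = (\<Sum>X\<in>Pow I. if even (card X) then 2 * (\<Prod>i\<in>X. x i) else 0)"
  proof (intro sum.cong refl)
    fix X show "(1 + (-1) ^ card X) * (\<Prod>i\<in>X. x i) = (if even (card X) then 2 * (\<Prod>i\<in>X. x i) else 0)"
      by (cases "even (card X)") simp_all
  qed
  also have "\<dots> = (\<Sum>X\<in>{X\<in>Pow I. even (card X)}. 2 * (\<Prod>i\<in>X. x i))"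
    by (rule sum.inter_filter[symmetric]) (simp add: I)
  also have "{X\<in>Pow I. even (card X)} = {A. A \<subseteq> I \<and> even (card A)}" by auto
  also have "(\<Sum>X\<in>{A. A \<subseteq> I \<and> even (card A)}. 2 * (\<Prod>i\<in>X. x i)) = 2 * (\<Sum>A\<in>{A. A \<subseteq> I \<and> even (card A)}. \<Prod>i\<in>A. x i)"
    by (rule sum_distrib_left[symmetric])
  finally have eq: "(\<Prod>i\<in>I. 1 + x i) + (\<Prod>i\<in>I. 1 - x i) = 2 * (\<Sum>A\<in>{A. A \<subseteq> I \<and> even (card A)}. \<Prod>i\<in>A. x i)" .
  have two: "(2::complex) \<noteq> 0" by simp
  show ?thesis unfolding eq by (rule nonzero_mult_div_cancel_left[OF two, symmetric])
qed



lemma prod_approx: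
  fixes y :: "'a \<Rightarrow> complex"
  assumes "finite T" "\<And>t. t \<in> T \<Longrightarrow> norm (y t) \<le> c" "c \<le> 1"
  shows "norm ((\<Prod>t\<in>T. 1 - y t) - 1 + (\<Sum>t\<in>T. y t)) \<le> 3 ^ card T * c^2"
  using assms
proof (induction T rule: finite_induct)
  case empty
  then show ?case by simp
next
  case (insert a F)
  define P where "P = (\<Prod>t\<in>F. 1 - y t)"
  define s where "s = (\<Sum>t\<in>F. y t)"
  define E where "E = P - 1 + s"
  define m where "m = card F"
  have ya: "norm (y a) \<le> c" using insert.prems by auto
  have c0: "0 \<le> c" using ya norm_ge_zero order_trans by blast
  have IH: "norm E \<le> 3 ^ m * c^2" unfolding E_def P_def s_def m_def
    using insert.IH insert.prems by auto
  have hs: "norm s \<le> real m * c"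
  proof -
    have "norm s \<le> (\<Sum>t\<in>F. norm (y t))" unfolding s_def by (rule norm_sum)
    also have "\<dots> \<le> (\<Sum>t\<in>F. c)" using insert.prems by (intro sum_mono) auto
    also have "\<dots> = real m * c" by (simp add: m_def)
    finally show ?thesis .
  qed
  have eq: "(\<Prod>t\<in>insert a F. 1 - y t) - 1 + (\<Sum>t\<in>insert a F. y t) = E - y a * E + y a * s"
    using insert.hyps unfolding E_def P_def s_def by (simp add: algebra_simps)
  have mle: "real m \<le> 3 ^ m"
  proof -
    have "m < 2 ^ m" by (rule less_exp)
    also have "(2::nat) ^ m \<le> 3 ^ m" by (rule power_mono) auto
    finally show ?thesis by (metis less_imp_le of_nat_le_iff of_nat_numeral of_nat_power)
  qed
  have nE: "norm (y a * E) \<le> 3 ^ m * c^2"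
  proof -
    have "norm (y a * E) = norm (y a) * norm E" by (simp add: norm_mult)
    also have "\<dots> \<le> 1 * (3 ^ m * c^2)" using ya IH \<open>c \<le> 1\<close> by (intro mult_mono) auto
    finally show ?thesis by simp
  qed
  have ns: "norm (y a * s) \<le> 3 ^ m * c^2"
  proof -
    have "norm (y a * s) = norm (y a) * norm s" by (simp add: norm_mult)
    also have "\<dots> \<le> c * (real m * c)" using ya hs c0 by (intro mult_mono) auto
    also have "\<dots> = real m * c^2" by (simp add: power2_eq_square)
    also have "\<dots> \<le> 3 ^ m * c^2" using mle by (intro mult_right_mono) auto
    finally show ?thesis .
  qed
  have t1: "norm (E - y a * E + y a * s) \<le> norm (E - y a * E) + norm (y a * s)"
    by (rule norm_triangle_ineq)
  have t2: "norm (E - y a * E) \<le> norm E + norm (y a * E)" by (rule norm_triangle_ineq4)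
  have "norm (E - y a * E + y a * s) \<le> norm E + norm (y a * E) + norm (y a * s)"
    using t1 t2 by linarith
  also have "\<dots> \<le> 3 ^ m * c^2 + 3 ^ m * c^2 + 3 ^ m * c^2" using IH nE ns by linarith
  also have "\<dots> = 3 ^ card (insert a F) * c^2" using insert.hyps by (simp add: m_def)
  finally show ?case using eq by simp
qed

lemma pairs_sum:
  fixes f :: "nat set \<Rightarrow> complex"
  shows "(\<Sum>A\<in>{A. A \<subseteq> {1..n} \<and> card A = 2}. f A) = (\<Sum>(i,j)\<in>Sigma {1..n} (\<lambda>i. {i<..n}). f {i,j})"
proof -
  have bij: "bij_betw (\<lambda>(i,j). {i,j}) (Sigma {1..n} (\<lambda>i. {i<..n})) {A. A \<subseteq> {1..n} \<and> card A = 2}"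
  proof (rule bij_betwI')
    fix a b assume "a \<in> Sigma {1..n} (\<lambda>i. {i<..n})" "b \<in> Sigma {1..n} (\<lambda>i. {i<..n})"
    then obtain i j i' j' where ab: "a = (i,j)" "b = (i',j')" "i < j" "i' < j'" by auto
    show "((\<lambda>(i,j). {i,j}) a = (\<lambda>(i,j). {i,j}) b) = (a = b)"
      using ab by (auto simp: doubleton_eq_iff)
  next
    fix a assume "a \<in> Sigma {1..n} (\<lambda>i. {i<..n})"
    then show "(\<lambda>(i,j). {i,j}) a \<in> {A. A \<subseteq> {1..n} \<and> card A = 2}" by auto
  next
    fix A assume "A \<in> {A. A \<subseteq> {1..n} \<and> card A = 2}"
    then obtain a b where A: "A = {a,b}" "a \<noteq> b" "A \<subseteq> {1..n}" by (auto simp: card_2_iff)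
    show "\<exists>x\<in>Sigma {1..n} (\<lambda>i. {i<..n}). A = (\<lambda>(i,j). {i,j}) x"
    proof (rule bexI[where x = "(min a b, max a b)"])
      show "A = (\<lambda>(i,j). {i,j}) (min a b, max a b)" using A by (auto simp: min_def max_def)
      show "(min a b, max a b) \<in> Sigma {1..n} (\<lambda>i. {i<..n})" using A by (auto simp: min_def max_def)
    qed
  qed
  show ?thesis
    using sum.reindex_bij_betw[OF bij, of f] by (simp add: case_prod_unfold)
qed



definition cT :: "nat \<Rightarrow> nat" where "cT n = card (Sigma {1..n} (\<lambda>i. {i<..n}))"

definition Mc :: "nat \<Rightarrow> real" where
  "Mc n = 2 ^ n + real (cT n) ^ 2 + real (cT n) * 2 ^ n + 3 ^ cT n * 2 ^ n"

lemma C_bound: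
  fixes x :: "nat \<Rightarrow> complex" and q :: real
  assumes hx: "\<And>i. i \<in> {1..n} \<Longrightarrow> norm (x i) \<le> q" and q0: "0 \<le> q" and q1: "q \<le> 1"
  shows "norm ((\<Prod>i\<in>{1..n}. \<Prod>j\<in>{i<..n}. (1 - x i * x j))
           * (\<Sum>A\<in>{A. A \<subseteq> {1..n} \<and> even (card A)}. \<Prod>i\<in>A. x i) - 1) \<le> Mc n * q ^ 4"
proof -
  define I where "I = {1..n}"
  define T where "T = Sigma I (\<lambda>i. {i<..n})"
  define t where "t = cT n"
  define Ev where "Ev = {A. A \<subseteq> I \<and> even (card A)}"
  define e2 where "e2 = (\<Sum>p\<in>T. x (fst p) * x (snd p))"
  define P where "P = (\<Prod>i\<in>I. \<Prod>j\<in>{i<..n}. (1 - x i * x j))"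
  define S where "S = (\<Sum>A\<in>Ev. \<Prod>i\<in>A. x i)"
  define R where "R = (\<Sum>A\<in>Ev. if 4 \<le> card A then (\<Prod>i\<in>A. x i) else 0)"
  define E where "E = P - 1 + e2"
  have finI: "finite I" unfolding I_def by simp
  have finT: "finite T" unfolding T_def I_def by simp
  have tT: "card T = t" unfolding T_def I_def t_def cT_def by simp
  have EvPow: "Ev \<subseteq> Pow I" unfolding Ev_def by auto
  have finEv: "finite Ev" using EvPow finI finite_subset by blast
  have cardEv: "real (card Ev) \<le> 2 ^ n"
  proof -
    have "card Ev \<le> card (Pow I)" using EvPow finI by (intro card_mono) auto
    also have "card (Pow I) = 2 ^ n" using finI by (simp add: card_Pow I_def)
    finally show ?thesis by (metis of_nat_le_iff of_nat_numeral of_nat_power)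
  qed
  have xT: "norm (x (fst p) * x (snd p)) \<le> q ^ 2" if "p \<in> T" for p
  proof -
    have "fst p \<in> I" "snd p \<in> I" using that unfolding T_def I_def by auto
    hence "norm (x (fst p)) \<le> q" "norm (x (snd p)) \<le> q" using hx unfolding I_def by auto
    hence "norm (x (fst p)) * norm (x (snd p)) \<le> q * q" using q0 by (intro mult_mono) auto
    thus ?thesis by (simp add: norm_mult power2_eq_square)
  qed
  have q21: "q ^ 2 \<le> 1" using q0 q1 by (simp add: power_le_one)
  have q4: "(q ^ 2) ^ 2 = q ^ 4" by (simp flip: power_mult)
  have hP: "P = (\<Prod>p\<in>T. 1 - x (fst p) * x (snd p))"
  proof -
    have "P = (\<Prod>(i,j)\<in>T. 1 - x i * x j)" unfolding P_def T_def
      by (rule prod.Sigma) (auto simp: I_def)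
    thus ?thesis by (simp add: case_prod_unfold)
  qed
  have bE: "norm E \<le> 3 ^ t * q ^ 4"
  proof -
    have "norm E \<le> 3 ^ card T * (q ^ 2) ^ 2" unfolding E_def hP e2_def
      by (rule prod_approx[OF finT xT q21])
    thus ?thesis using tT q4 by simp
  qed
  have be2: "norm e2 \<le> real t * q ^ 2"
  proof -
    have "norm e2 \<le> (\<Sum>p\<in>T. norm (x (fst p) * x (snd p)))" unfolding e2_def by (rule norm_sum)
    also have "\<dots> \<le> (\<Sum>p\<in>T. q ^ 2)" using xT by (intro sum_mono) auto
    also have "\<dots> = real t * q ^ 2" using tT by simp
    finally show ?thesis .
  qed
  have nxA: "norm (\<Prod>i\<in>A. x i) \<le> q ^ card A" if "A \<in> Ev" for A
  proof -
    have AI: "A \<subseteq> I" using that unfolding Ev_def by auto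
    have "norm (\<Prod>i\<in>A. x i) = (\<Prod>i\<in>A. norm (x i))" by (rule prod_norm[symmetric])
    also have "\<dots> \<le> (\<Prod>i\<in>A. q)" using AI hx unfolding I_def by (intro prod_mono) auto
    also have "\<dots> = q ^ card A" by simp
    finally show ?thesis .
  qed
  have bR: "norm R \<le> 2 ^ n * q ^ 4"
  proof -
    have "norm R \<le> (\<Sum>A\<in>Ev. norm (if 4 \<le> card A then (\<Prod>i\<in>A. x i) else 0))"
      unfolding R_def by (rule norm_sum)
    also have "\<dots> \<le> (\<Sum>A\<in>Ev. q ^ 4)"
    proof (rule sum_mono)
      fix A assume A: "A \<in> Ev"
      show "norm (if 4 \<le> card A then (\<Prod>i\<in>A. x i) else 0) \<le> q ^ 4"
      proof (cases "4 \<le> card A")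
        case True
        have "q ^ card A \<le> q ^ 4" using True q0 q1 by (rule power_decreasing)
        thus ?thesis using True nxA[OF A] by simp
      next
        case False thus ?thesis using q0 by simp
      qed
    qed
    also have "\<dots> = real (card Ev) * q ^ 4" by simp
    also have "\<dots> \<le> 2 ^ n * q ^ 4" using cardEv q0 by (intro mult_right_mono) auto
    finally show ?thesis .
  qed
  have bS: "norm S \<le> 2 ^ n"
  proof -
    have "norm S \<le> (\<Sum>A\<in>Ev. norm (\<Prod>i\<in>A. x i))" unfolding S_def by (rule norm_sum)
    also have "\<dots> \<le> (\<Sum>A\<in>Ev. 1)"
    proof (rule sum_mono)
      fix A assume A: "A \<in> Ev"
      have "q ^ card A \<le> 1" using q0 q1 by (rule power_le_one)
      thus "norm (\<Prod>i\<in>A. x i) \<le> 1" using nxA[OF A] by linarith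
    qed
    also have "\<dots> = real (card Ev)" by simp
    finally show ?thesis using cardEv by linarith
  qed
  have hS: "S = 1 + e2 + R"
  proof -
    have "S = (\<Sum>A\<in>Ev. (if card A = 0 then (\<Prod>i\<in>A. x i) else 0)
                + (if card A = 2 then (\<Prod>i\<in>A. x i) else 0)
                + (if 4 \<le> card A then (\<Prod>i\<in>A. x i) else 0))"
      unfolding S_def
    proof (rule sum.cong[OF refl])
      fix A assume "A \<in> Ev"
      hence ev: "even (card A)" unfolding Ev_def by auto
      have "card A = 0 \<or> card A = 2 \<or> 4 \<le> card A"
      proof -
        obtain m where "card A = 2 * m" using ev by blast
        thus ?thesis by presburger
      qed
      thus "(\<Prod>i\<in>A. x i) = (if card A = 0 then (\<Prod>i\<in>A. x i) else 0)
                + (if card A = 2 then (\<Prod>i\<in>A. x i) else 0)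
                + (if 4 \<le> card A then (\<Prod>i\<in>A. x i) else 0)" by auto
    qed
    also have "\<dots> = (\<Sum>A\<in>Ev. (if card A = 0 then (\<Prod>i\<in>A. x i) else 0))
                + (\<Sum>A\<in>Ev. (if card A = 2 then (\<Prod>i\<in>A. x i) else 0)) + R"
      unfolding R_def by (simp only: sum.distrib)
    also have "(\<Sum>A\<in>Ev. (if card A = 0 then (\<Prod>i\<in>A. x i) else 0)) = 1"
    proof -
      have "(\<Sum>A\<in>Ev. (if card A = 0 then (\<Prod>i\<in>A. x i) else 0)) = (\<Sum>A\<in>{A\<in>Ev. card A = 0}. \<Prod>i\<in>A. x i)"
        by (rule sum.inter_filter[OF finEv, symmetric])
      also have "{A\<in>Ev. card A = 0} = {{}}"
      proof -
        have "A = {}" if "A \<in> Ev" "card A = 0" for A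
          using that EvPow finI by (meson PowD card_0_eq finite_subset subsetD)
        moreover have "{} \<in> Ev" unfolding Ev_def by simp
        ultimately show ?thesis by auto
      qed
      finally show ?thesis by simp
    qed
    also have "(\<Sum>A\<in>Ev. (if card A = 2 then (\<Prod>i\<in>A. x i) else 0)) = e2"
    proof -
      have "(\<Sum>A\<in>Ev. (if card A = 2 then (\<Prod>i\<in>A. x i) else 0)) = (\<Sum>A\<in>{A\<in>Ev. card A = 2}. \<Prod>i\<in>A. x i)"
        by (rule sum.inter_filter[OF finEv, symmetric])
      also have "{A\<in>Ev. card A = 2} = {A. A \<subseteq> {1..n} \<and> card A = 2}"
        unfolding Ev_def I_def by auto
      also have "(\<Sum>A\<in>{A. A \<subseteq> {1..n} \<and> card A = 2}. \<Prod>i\<in>A. x i)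
           = (\<Sum>(i,j)\<in>Sigma {1..n} (\<lambda>i. {i<..n}). \<Prod>k\<in>{i,j}. x k)"
        by (rule pairs_sum)
      also have "\<dots> = e2" unfolding e2_def T_def I_def case_prod_unfold
        by (intro sum.cong refl) auto
      finally show ?thesis .
    qed
    finally show ?thesis .
  qed
  have hPe: "P = 1 - e2 + E" unfolding E_def by simp
  have key: "P * S - 1 = R - e2 ^ 2 - e2 * R + E * S"
    unfolding hS hPe by (simp add: algebra_simps power2_eq_square)
  have tri: "norm (R - e2 ^ 2 - e2 * R + E * S) \<le> norm R + norm e2 ^ 2 + norm e2 * norm R + norm E * norm S"
  proof -
    have a1: "norm (R - e2 ^ 2 - e2 * R + E * S) \<le> norm (R - e2 ^ 2 - e2 * R) + norm (E * S)"
      by (rule norm_triangle_ineq)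
    have a2: "norm (R - e2 ^ 2 - e2 * R) \<le> norm (R - e2 ^ 2) + norm (e2 * R)"
      by (rule norm_triangle_ineq4)
    have a3: "norm (R - e2 ^ 2) \<le> norm R + norm (e2 ^ 2)"
      by (rule norm_triangle_ineq4)
    have a4: "norm (e2 ^ 2) = norm e2 ^ 2" by (rule norm_power)
    have a5: "norm (e2 * R) = norm e2 * norm R" by (rule norm_mult)
    have a6: "norm (E * S) = norm E * norm S" by (rule norm_mult)
    show ?thesis using a1 a2 a3 a4 a5 a6 by linarith
  qed
  have b2: "norm e2 ^ 2 \<le> real t ^ 2 * q ^ 4"
  proof -
    have "norm e2 ^ 2 \<le> (real t * q ^ 2) ^ 2" using be2 by (intro power_mono) auto
    also have "\<dots> = real t ^ 2 * q ^ 4" by (simp add: power_mult_distrib q4)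
    finally show ?thesis .
  qed
  have b3: "norm e2 * norm R \<le> real t * 2 ^ n * q ^ 4"
  proof -
    have "norm e2 * norm R \<le> (real t * q ^ 2) * (2 ^ n * q ^ 4)"
      using be2 bR by (intro mult_mono) auto
    also have "\<dots> = (real t * 2 ^ n * q ^ 4) * q ^ 2" by (simp add: algebra_simps)
    also have "\<dots> \<le> (real t * 2 ^ n * q ^ 4) * 1" using q21 q0 by (intro mult_left_mono) auto
    finally show ?thesis by simp
  qed
  have b4: "norm E * norm S \<le> 3 ^ t * 2 ^ n * q ^ 4"
  proof -
    have "norm E * norm S \<le> (3 ^ t * q ^ 4) * 2 ^ n"
      using bE bS q0 by (intro mult_mono) auto
    thus ?thesis by (simp add: algebra_simps)
  qed
  have "norm (P * S - 1) \<le> Mc n * q ^ 4"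
    unfolding key Mc_def t_def[symmetric] using tri bR b2 b3 b4 by (simp add: algebra_simps)
  thus ?thesis unfolding P_def S_def Ev_def I_def .
qed



lemma setup_x:
  fixes p :: nat and u :: "nat \<Rightarrow> complex" and \<theta> :: real
  assumes pp: "prime p" and hu: "\<forall>i\<in>I. Re (u i) \<ge> \<theta>" and th: "\<theta> > 0" and iI: "i \<in> I"
  shows "norm (1 / (of_nat p :: complex) powr u i) \<le> real p powr (-\<theta>)"
proof -
  have p2: "p \<ge> 2" using pp by (rule prime_ge_2_nat)
  have n: "norm ((of_nat p :: complex) powr u i) = real p powr Re (u i)"
    by (subst norm_powr_real_powr) auto
  have "real p powr \<theta> \<le> real p powr Re (u i)"
    using hu iI p2 by (intro powr_mono) auto
  moreover have "real p powr \<theta> > 0" using p2 by simp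
  ultimately have "1 / real p powr Re (u i) \<le> 1 / real p powr \<theta>"
    by (intro divide_left_mono) auto
  thus ?thesis by (simp add: norm_divide n powr_minus_divide)
qed

lemma q_less_1:
  assumes pp: "prime p" and th: "(\<theta>::real) > 0"
  shows "real p powr (-\<theta>) < 1" "0 \<le> real p powr (-\<theta>)"
proof -
  have p2: "p \<ge> 2" using pp by (rule prime_ge_2_nat)
  show "real p powr (-\<theta>) < 1" using p2 th by (intro powr_less_one) auto
  show "0 \<le> real p powr (-\<theta>)" by simp
qed

lemma Cpk_x:
  fixes p :: nat and u :: "nat \<Rightarrow> complex"
  assumes "p > 0"
  defines "x \<equiv> \<lambda>i. 1 / (of_nat p :: complex) powr u i"
  shows "Cpk p m u = (\<Prod>i\<in>{1..m}. \<Prod>j\<in>{i<..m}. (1 - x i * x j))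
           * (\<Sum>A\<in>{A. A \<subseteq> {1..m} \<and> even (card A)}. \<Prod>i\<in>A. x i)"
proof -
  have pxx: "1 / (of_nat p :: complex) powr (u i + u j) = x i * x j" for i j
    unfolding x_def by (simp add: powr_add)
  have xi: "1 / (of_nat p :: complex) powr u i = x i" for i unfolding x_def by simp
  show ?thesis unfolding Cpk_def by (simp only: pxx xi)
qed

lemma part1:
  fixes p :: nat and u :: "nat \<Rightarrow> complex" and m :: nat
  assumes p0: "p > 0"
  defines "x \<equiv> \<lambda>i. 1 / (of_nat p :: complex) powr u i"
  assumes hx: "\<And>i. i \<in> {1..m} \<Longrightarrow> norm (x i) < 1"
  shows "Bpk p m u 0 =
              (\<Prod>i\<in>{1..m}. \<Prod>j\<in>{i..m}. inverse (1 - 1 / (of_nat p) powr (u i + u j)))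
              * Cpk p m u"
proof -
  define I where "I = {1..m}"
  have finI: "finite I" unfolding I_def by simp
  have hxI: "\<And>i. i \<in> I \<Longrightarrow> norm (x i) < 1" using hx unfolding I_def by auto
  have pxx: "1 / (of_nat p :: complex) powr (u i + u j) = x i * x j" for i j
    unfolding x_def by (simp add: powr_add)
  have L: "Bpk p m u 0 = ((\<Prod>i\<in>I. 1 / (1 - x i)) + (\<Prod>i\<in>I. 1 / (1 + x i))) / 2"
  proof -
    have "Bpk p m u 0 = infsum (\<lambda>n. \<Prod>i\<in>I. x i ^ n i)
           {n. (\<forall>i. i \<notin> I \<longrightarrow> n i = 0) \<and> (\<Sum>i\<in>I. n i) mod 2 = 0 mod 2}"
      unfolding Bpk_def I_def x_def
      by (intro infsum_cong) (rule summand_eq[OF p0])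
    also have "\<dots> = ((\<Prod>i\<in>I. 1 / (1 - x i)) + (\<Prod>i\<in>I. 1 / (1 + x i))) / 2"
      by (rule infsumI[OF even_sum_Nall[OF finI hxI]])
    finally show ?thesis .
  qed
  have nz: "1 - x i * x j \<noteq> 0" if "i \<in> I" "j \<in> I" for i j
  proof
    assume "1 - x i * x j = 0"
    hence "x i * x j = 1" by simp
    hence "norm (x i) * norm (x j) = 1" by (metis norm_mult norm_one)
    moreover have "norm (x i) * norm (x j) < 1 * 1"
      using hxI[OF that(1)] hxI[OF that(2)] by (intro mult_strict_mono') auto
    ultimately show False by simp
  qed
  have per: "(\<Prod>j\<in>{i..m}. inverse (1 - x i * x j)) * (\<Prod>j\<in>{i<..m}. (1 - x i * x j))
              = inverse (1 - x i * x i)" if iI: "i \<in> I" for i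
  proof -
    have im: "{i..m} = insert i {i<..m}" using iI unfolding I_def by auto
    have "(\<Prod>j\<in>{i<..m}. inverse (1 - x i * x j)) * (\<Prod>j\<in>{i<..m}. (1 - x i * x j))
          = (\<Prod>j\<in>{i<..m}. inverse (1 - x i * x j) * (1 - x i * x j))"
      by (rule prod.distrib[symmetric])
    also have "\<dots> = (\<Prod>j\<in>{i<..m}. 1)"
    proof (rule prod.cong[OF refl])
      fix j assume "j \<in> {i<..m}"
      hence "j \<in> I" using iI unfolding I_def by auto
      thus "inverse (1 - x i * x j) * (1 - x i * x j) = 1" using nz[OF iI] by simp
    qed
    finally have one: "(\<Prod>j\<in>{i<..m}. inverse (1 - x i * x j)) * (\<Prod>j\<in>{i<..m}. (1 - x i * x j)) = 1"
      by simp
    show ?thesis unfolding im using one by (simp add: mult.assoc)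
  qed
  have per2: "inverse (1 - x i * x i) * (1 + x i) = 1 / (1 - x i)"
             "inverse (1 - x i * x i) * (1 - x i) = 1 / (1 + x i)" if iI: "i \<in> I" for i
  proof -
    have a: "1 - x i \<noteq> 0" and b: "1 + x i \<noteq> 0"
    proof -
      show "1 - x i \<noteq> 0" using hxI[OF iI] by (metis eq_iff_diff_eq_0 norm_one less_irrefl)
      show "1 + x i \<noteq> 0" using hxI[OF iI]
        by (metis add_eq_0_iff norm_minus_cancel norm_one less_irrefl)
    qed
    have c: "1 - x i * x i = (1 - x i) * (1 + x i)" by (simp add: algebra_simps)
    show "inverse (1 - x i * x i) * (1 + x i) = 1 / (1 - x i)"
      unfolding c inverse_mult_distrib using b by (simp add: divide_inverse mult.assoc)
    have "inverse ((1 - x i) * (1 + x i)) * (1 - x i) = inverse (1 + x i) * (inverse (1 - x i) * (1 - x i))"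
      unfolding inverse_mult_distrib by (simp only: mult_ac)
    also have "\<dots> = 1 / (1 + x i)" using a by (simp add: divide_inverse)
    finally show "inverse (1 - x i * x i) * (1 - x i) = 1 / (1 + x i)" unfolding c .
  qed
  have "(\<Prod>i\<in>I. \<Prod>j\<in>{i..m}. inverse (1 - 1 / (of_nat p) powr (u i + u j))) * Cpk p m u
      = (\<Prod>i\<in>I. \<Prod>j\<in>{i..m}. inverse (1 - x i * x j))
         * ((\<Prod>i\<in>I. \<Prod>j\<in>{i<..m}. (1 - x i * x j))
           * (\<Sum>A\<in>{A. A \<subseteq> I \<and> even (card A)}. \<Prod>i\<in>A. x i))"
  proof -
    have C: "Cpk p m u = (\<Prod>i\<in>{1..m}. \<Prod>j\<in>{i<..m}. (1 - x i * x j))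
           * (\<Sum>A\<in>{A. A \<subseteq> {1..m} \<and> even (card A)}. \<Prod>i\<in>A. x i)"
      unfolding x_def by (rule Cpk_x[OF p0])
    show ?thesis unfolding C pxx I_def ..
  qed
  also have "\<dots> = (\<Prod>i\<in>I. (\<Prod>j\<in>{i..m}. inverse (1 - x i * x j)) * (\<Prod>j\<in>{i<..m}. (1 - x i * x j)))
           * (\<Sum>A\<in>{A. A \<subseteq> I \<and> even (card A)}. \<Prod>i\<in>A. x i)"
    by (simp only: prod.distrib mult.assoc)
  also have "\<dots> = (\<Prod>i\<in>I. inverse (1 - x i * x i))
           * (((\<Prod>i\<in>I. 1 + x i) + (\<Prod>i\<in>I. 1 - x i)) / 2)"
    unfolding even_subsets_sum[OF finI] using per by (simp cong: prod.cong)
  also have "\<dots> = ((\<Prod>i\<in>I. inverse (1 - x i * x i) * (1 + x i))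
                 + (\<Prod>i\<in>I. inverse (1 - x i * x i) * (1 - x i))) / 2"
    unfolding prod.distrib by (simp only: times_divide_eq_right distrib_left)
  also have "\<dots> = ((\<Prod>i\<in>I. 1 / (1 - x i)) + (\<Prod>i\<in>I. 1 / (1 + x i))) / 2"
    using per2 by (simp cong: prod.cong)
  finally have R: "(\<Prod>i\<in>I. \<Prod>j\<in>{i..m}. inverse (1 - 1 / (of_nat p) powr (u i + u j))) * Cpk p m u = ((\<Prod>i\<in>I. 1 / (1 - x i)) + (\<Prod>i\<in>I. 1 / (1 + x i))) / 2" .
  show ?thesis using trans[OF L sym[OF R]] unfolding I_def .
qed

theorem lemmaA2:
  fixes k :: nat and \<theta> :: real
  assumes "k \<ge> 1" and "\<theta> > 0"
  shows "(\<forall>(p::nat) (u::nat \<Rightarrow> complex). prime p \<longrightarrow> (\<forall>i\<in>{1..2*k}. Re (u i) \<ge> \<theta>) \<longrightarrow>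
            Bpk p (2*k) u 0 =
              (\<Prod>i\<in>{1..2*k}. \<Prod>j\<in>{i..2*k}. inverse (1 - 1 / (of_nat p) powr (u i + u j)))
              * Cpk p (2*k) u)
       \<and> (\<exists>M::real. \<forall>(p::nat) (u::nat \<Rightarrow> complex). prime p \<longrightarrow> (\<forall>i\<in>{1..2*k}. Re (u i) \<ge> \<theta>) \<longrightarrow>
            norm (Cpk p (2*k) u - 1) \<le> M / (real p) powr (4 * \<theta>))"
proof (intro conjI allI impI)
  fix p :: nat and u :: "nat \<Rightarrow> complex"
  assume pp: "prime p" and hu: "\<forall>i\<in>{1..2*k}. Re (u i) \<ge> \<theta>"
  have p0: "p > 0" using pp prime_gt_0_nat by blast
  have hx: "norm (1 / (of_nat p :: complex) powr u i) < 1" if "i \<in> {1..2*k}" for i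
    using setup_x[OF pp hu \<open>\<theta> > 0\<close> that] q_less_1[OF pp \<open>\<theta> > 0\<close>] by linarith
  show "Bpk p (2*k) u 0 =
              (\<Prod>i\<in>{1..2*k}. \<Prod>j\<in>{i..2*k}. inverse (1 - 1 / (of_nat p) powr (u i + u j)))
              * Cpk p (2*k) u"
    by (rule part1[OF p0]) (use hx in auto)
next
  show "\<exists>M::real. \<forall>(p::nat) (u::nat \<Rightarrow> complex). prime p \<longrightarrow> (\<forall>i\<in>{1..2*k}. Re (u i) \<ge> \<theta>) \<longrightarrow>
            norm (Cpk p (2*k) u - 1) \<le> M / (real p) powr (4 * \<theta>)"
  proof (intro exI allI impI)
    fix p :: nat and u :: "nat \<Rightarrow> complex"
    assume pp: "prime p" and hu: "\<forall>i\<in>{1..2*k}. Re (u i) \<ge> \<theta>"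
    have p0: "p > 0" using pp prime_gt_0_nat by blast
    define q where "q = real p powr (-\<theta>)"
    have "norm (Cpk p (2*k) u - 1) \<le> Mc (2*k) * q ^ 4"
      unfolding Cpk_x[OF p0] q_def
      by (rule C_bound) (use setup_x[OF pp hu \<open>\<theta> > 0\<close>] q_less_1[OF pp \<open>\<theta> > 0\<close>] in auto)
    also have "q ^ 4 = 1 / real p powr (4 * \<theta>)"
    proof -
      have "q ^ 4 = real p powr (of_nat 4 * (-\<theta>))" unfolding q_def
        by (rule powr_power) (use p0 in auto)
      also have "\<dots> = 1 / real p powr (4 * \<theta>)" by (simp add: powr_minus_divide)
      finally show ?thesis .
    qed
    finally show "norm (Cpk p (2*k) u - 1) \<le> Mc (2*k) / (real p) powr (4 * \<theta>)" by simp
  qed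
qed


end
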